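(* Let $n\ge1$ and let $\mathbf F$ be any family of subsets of $[n]$. Identify vertices of $Q_n$ with subsets of $[n]$. Let $G(\mathbf F)$ be the subgraph of $Q_n$ induced by $\mathbf X(\mathbf F)$ and $G'(\mathbf F)$ the subgraph induced by its complement $2^{[n]}\setminus \mathbf X(\mathbf F)$. Then $\Delta(G(\mathbf F))\le \max\{r(\mathbf F),t(\mathbf F)\}$ and $\Delta(G'(\mathbf F))\le\max\{r(\mathbf F),t(\mathbf F)\}$.
   Context: $[n]=\{1,\dots,n\}$; a subset $T\subseteq[n]$ is identified with the vertex $x\in\{0,1\}^n$ having $x_i=1$ iff $i\in T$, so two subsets are adjacent in $Q_n$ iff their symmetric difference has exactly one element. $\mathbf X(\mathbf F)=\{S\subseteq[n]: |S| \text{ even and } F\subseteq S \text{ for some } F\in\mathbf F\}\cup\{S\subseteq[n]: |S|\text{ odd and } F\not\subseteq S\text{ for all }F\in\mathbf F\}$. The rank $r(\mathbf F)$ is the largest cardinality of a member of $\mathbf F$. $t(\mathbf F)$ is the largest $t$ for which there exist $F_1,\dots,F_t\in\mathbf F$ and elements $x_1,\dots,x_t$ with $x_i\in F_j$ iff $i=j$ (for all $1\le i,j\le t$). $\Delta$ denotes maximum degree. *)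

theory Defs
  imports Main
begin

definition XF :: "nat \<Rightarrow> nat set set \<Rightarrow> nat set set" where
  "XF n F = {S. S \<subseteq> {1..n} \<and> even (card S) \<and> (\<exists>A\<in>F. A \<subseteq> S)}
          \<union> {S. S \<subseteq> {1..n} \<and> odd (card S) \<and> (\<forall>A\<in>F. \<not> A \<subseteq> S)}"

definition cube_adj :: "nat set \<Rightarrow> nat set \<Rightarrow> bool" where
  "cube_adj S T \<longleftrightarrow> card ((S - T) \<union> (T - S)) = 1"

definition ind_degree :: "nat set set \<Rightarrow> nat set \<Rightarrow> nat" where
  "ind_degree V S = card {T \<in> V. cube_adj S T}"

definition max_degree :: "nat set set \<Rightarrow> nat" where
  "max_degree V = Max (insert 0 (ind_degree V ` V))"

definition rank_fam :: "nat set set \<Rightarrow> nat" where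
  "rank_fam F = Max (insert 0 (card ` F))"

definition t_fam :: "nat set set \<Rightarrow> nat" where
  "t_fam F = Max {t. \<exists>Fs xs. (\<forall>i\<in>{1..t}. Fs i \<in> F) \<and>
                      (\<forall>i\<in>{1..t}. \<forall>j\<in>{1..t}. (xs i \<in> Fs j \<longleftrightarrow> i = j))}"

end

theory Submission
  imports Defs
begin

lemma adj_cases:
  assumes "finite S" "finite T" "cube_adj S T"
  shows "(\<exists>x\<in>S. T = S - {x}) \<or> (\<exists>x. x \<notin> S \<and> T = insert x S)"
proof -
  from assms(3) obtain x where x: "(S - T) \<union> (T - S) = {x}"
    unfolding cube_adj_def by (rule card_1_singletonE)
  have iff: "y \<in> (S - T) \<union> (T - S) \<longleftrightarrow> y = x" for y using x by simp
  show ?thesis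
  proof (cases "x \<in> S")
    case True
    have "T = S - {x}"
    proof (rule set_eqI)
      fix y show "y \<in> T \<longleftrightarrow> y \<in> S - {x}" using iff[of y] True by auto
    qed
    then show ?thesis using True by blast
  next
    case False
    have "T = insert x S"
    proof (rule set_eqI)
      fix y show "y \<in> T \<longleftrightarrow> y \<in> insert x S" using iff[of y] False by auto
    qed
    then show ?thesis using False by blast
  qed
qed

lemma tset_bound:
  assumes "\<forall>A\<in>F. A \<subseteq> {1..(n::nat)}"
  shows "finite {t::nat. \<exists>Fs xs. (\<forall>i\<in>{1..t}. Fs i \<in> F) \<and>
                      (\<forall>i\<in>{1..t}. \<forall>j\<in>{1..t}. (xs i \<in> Fs j \<longleftrightarrow> i = j))}"
proof (rule finite_subset[where B="{..n}"])
  show "finite {..n}" by simp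
  show "{t::nat. \<exists>Fs xs. (\<forall>i\<in>{1..t}. Fs i \<in> F) \<and>
                      (\<forall>i\<in>{1..t}. \<forall>j\<in>{1..t}. (xs i \<in> Fs j \<longleftrightarrow> i = j))} \<subseteq> {..n}"
  proof
    fix t :: nat assume "t \<in> {t. \<exists>Fs xs. (\<forall>i\<in>{1..t}. Fs i \<in> F) \<and>
                      (\<forall>i\<in>{1..t}. \<forall>j\<in>{1..t}. (xs i \<in> Fs j \<longleftrightarrow> i = j))}"
    then obtain Fs xs where h1: "\<forall>i\<in>{1..t}. Fs i \<in> F"
      and h2: "\<forall>i\<in>{1..t}. \<forall>j\<in>{1..t}. (xs i \<in> Fs j \<longleftrightarrow> i = j)" by blast
    have inj: "inj_on xs {1..t}"
      unfolding inj_on_def using h2 by metis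
    have sub: "xs ` {1..t} \<subseteq> {1..n}"
      using h1 h2 assms by blast
    have "card (xs ` {1..t}) \<le> card {1..n}"
      by (rule card_mono[OF _ sub]) simp
    then show "t \<in> {..n}" using card_image[OF inj] by simp
  qed
qed

lemma down_case:
  assumes fin: "finite F0"
    and h: "\<forall>T\<in>V. cube_adj S T \<longrightarrow> (\<exists>x\<in>F0. T = S - {x})"
  shows "ind_degree V S \<le> card F0"
proof -
  have "{T \<in> V. cube_adj S T} \<subseteq> (\<lambda>x. S - {x}) ` F0" using h by blast
  then have "card {T \<in> V. cube_adj S T} \<le> card ((\<lambda>x. S - {x}) ` F0)"
    by (intro card_mono) (use fin in auto)
  also have "\<dots> \<le> card F0" by (rule card_image_le[OF fin])
  finally show ?thesis unfolding ind_degree_def .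
qed

lemma up_case:
  assumes F: "\<forall>A\<in>F. A \<subseteq> {1..(n::nat)}"
    and V: "V \<subseteq> Pow {1..n}"
    and noS: "\<forall>A\<in>F. \<not> A \<subseteq> S"
    and h: "\<forall>T\<in>V. cube_adj S T \<longrightarrow> (\<exists>x. x \<notin> S \<and> T = insert x S \<and> (\<exists>A\<in>F. A \<subseteq> T))"
  shows "ind_degree V S \<le> t_fam F"
proof -
  define D where "D = {x \<in> {1..n}. x \<notin> S \<and> (\<exists>A\<in>F. A \<subseteq> insert x S)}"
  have finD: "finite D" unfolding D_def by simp
  have "{T \<in> V. cube_adj S T} \<subseteq> (\<lambda>x. insert x S) ` D"
  proof
    fix T assume T: "T \<in> {T \<in> V. cube_adj S T}"
    then obtain x where x: "x \<notin> S" "T = insert x S" "\<exists>A\<in>F. A \<subseteq> T" using h by blast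
    have "x \<in> {1..n}" using T V x(2) by blast
    then show "T \<in> (\<lambda>x. insert x S) ` D" using x unfolding D_def by blast
  qed
  then have "card {T \<in> V. cube_adj S T} \<le> card ((\<lambda>x. insert x S) ` D)"
    by (intro card_mono) (use finD in auto)
  also have "\<dots> \<le> card D" by (rule card_image_le[OF finD])
  finally have c1: "ind_degree V S \<le> card D" unfolding ind_degree_def .
  obtain hh where hh: "bij_betw hh {1..card D} D" using ex_bij_betw_nat_finite_1[OF finD] by blast
  define Fs where "Fs i = (SOME A. A \<in> F \<and> A \<subseteq> insert (hh i) S)" for i
  have Fsp: "Fs i \<in> F \<and> Fs i \<subseteq> insert (hh i) S" if "i \<in> {1..card D}" for i
  proof -
    have "hh i \<in> D" using hh that bij_betwE by blast
    then have "\<exists>A. A \<in> F \<and> A \<subseteq> insert (hh i) S" unfolding D_def by blast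
    then show ?thesis unfolding Fs_def by (rule someI_ex)
  qed
  have key: "\<forall>i\<in>{1..card D}. \<forall>j\<in>{1..card D}. (hh i \<in> Fs j \<longleftrightarrow> i = j)"
  proof (intro ballI)
    fix i j assume i: "i \<in> {1..card D}" and j: "j \<in> {1..card D}"
    have hiD: "hh i \<in> D" using hh i bij_betwE by blast
    then have his: "hh i \<notin> S" unfolding D_def by blast
    show "hh i \<in> Fs j \<longleftrightarrow> i = j"
    proof
      assume a: "hh i \<in> Fs j"
      show "i = j"
      proof (rule ccontr)
        assume "i \<noteq> j"
        then have "hh i \<noteq> hh j" using hh i j unfolding bij_betw_def inj_on_def by blast
        then show False using a Fsp[OF j] his by blast
      qed
    next
      assume "i = j"
      have "Fs i \<in> F" "Fs i \<subseteq> insert (hh i) S" using Fsp[OF i] by auto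
      then show "hh i \<in> Fs j" using noS \<open>i = j\<close> by blast
    qed
  qed
  have mem: "card D \<in> {t. \<exists>Fs xs. (\<forall>i\<in>{1..t}. Fs i \<in> F) \<and>
                      (\<forall>i\<in>{1..t}. \<forall>j\<in>{1..t}. (xs i \<in> Fs j \<longleftrightarrow> i = j))}"
    using Fsp key by blast
  have "card D \<le> t_fam F" unfolding t_fam_def
    by (rule Max_ge[OF tset_bound[OF F] mem])
  then show ?thesis using c1 by simp
qed

lemma maxdeg_le:
  assumes "V \<subseteq> Pow {1..(n::nat)}" "\<forall>S\<in>V. ind_degree V S \<le> m"
  shows "max_degree V \<le> m"
proof -
  have "finite V" using assms(1) finite_subset by (metis finite_Pow_iff finite_atLeastAtMost)
  then show ?thesis unfolding max_degree_def using assms(2) by (simp add: Max_le_iff)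
qed

lemma rank_ge:
  assumes "\<forall>A\<in>F. A \<subseteq> {1..(n::nat)}" "A \<in> F"
  shows "card A \<le> rank_fam F"
proof -
  have "F \<subseteq> Pow {1..n}" using assms(1) by blast
  then have "finite F" by (metis finite_Pow_iff finite_atLeastAtMost finite_subset)
  then show ?thesis unfolding rank_fam_def using assms(2) by simp
qed

lemma nbr:
  assumes "finite S" "finite T" "cube_adj S T"
  shows "(\<exists>x\<in>S. T = S - {x} \<and> (even (card T) \<longleftrightarrow> odd (card S))) \<or>
         (\<exists>x. x \<notin> S \<and> T = insert x S \<and> (even (card T) \<longleftrightarrow> odd (card S)))"
proof -
  from adj_cases[OF assms] show ?thesis
  proof
    assume "\<exists>x\<in>S. T = S - {x}"
    then obtain x where x: "x \<in> S" "T = S - {x}" by blast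
    have "card S \<ge> 1" using x assms(1) by (metis One_nat_def Suc_leI card_gt_0_iff empty_iff)
    moreover have "card T = card S - 1" using x assms(1) by simp
    ultimately have "even (card T) \<longleftrightarrow> odd (card S)"
      by (metis Suc_diff_1 even_Suc less_le_trans zero_less_one)
    then show ?thesis using x by blast
  next
    assume "\<exists>x. x \<notin> S \<and> T = insert x S"
    then obtain x where x: "x \<notin> S" "T = insert x S" by blast
    have "card T = Suc (card S)" using x assms(1) by simp
    then show ?thesis using x by auto
  qed
qed

lemma XF_even: "T \<in> XF n F \<Longrightarrow> even (card T) \<Longrightarrow> \<exists>A\<in>F. A \<subseteq> T"
  unfolding XF_def by blast
lemma XF_odd: "T \<in> XF n F \<Longrightarrow> odd (card T) \<Longrightarrow> \<forall>A\<in>F. \<not> A \<subseteq> T"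
  unfolding XF_def by blast
lemma nX_even: "T \<subseteq> {1..n} \<Longrightarrow> T \<notin> XF n F \<Longrightarrow> even (card T) \<Longrightarrow> \<forall>A\<in>F. \<not> A \<subseteq> T"
  unfolding XF_def by blast
lemma nX_odd: "T \<subseteq> {1..n} \<Longrightarrow> T \<notin> XF n F \<Longrightarrow> odd (card T) \<Longrightarrow> \<exists>A\<in>F. A \<subseteq> T"
  unfolding XF_def by blast

theorem lemma3p2:
  fixes n :: nat and F :: "nat set set"
  assumes "n \<ge> 1"
    and "\<forall>A\<in>F. A \<subseteq> {1..n}"
  shows "max_degree (XF n F) \<le> max (rank_fam F) (t_fam F) \<and>
         max_degree (Pow {1..n} - XF n F) \<le> max (rank_fam F) (t_fam F)"
proof
  have fin: "finite S" if "S \<subseteq> {1..n}" for S using that finite_subset by blast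
  show "max_degree (XF n F) \<le> max (rank_fam F) (t_fam F)"
  proof (rule maxdeg_le[of _ n])
    show XV: "XF n F \<subseteq> Pow {1..n}" unfolding XF_def by blast
    show "\<forall>S\<in>XF n F. ind_degree (XF n F) S \<le> max (rank_fam F) (t_fam F)"
    proof
      fix S assume S: "S \<in> XF n F"
      have Sn: "S \<subseteq> {1..n}" using S XV by blast
      show "ind_degree (XF n F) S \<le> max (rank_fam F) (t_fam F)"
      proof (cases "even (card S)")
        case True
        then obtain F0 where F0: "F0 \<in> F" "F0 \<subseteq> S" using XF_even[OF S True] by blast
        have "ind_degree (XF n F) S \<le> card F0"
        proof (rule down_case)
          show "finite F0" using F0 Sn fin by blast
          show "\<forall>T\<in>XF n F. cube_adj S T \<longrightarrow> (\<exists>x\<in>F0. T = S - {x})"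
          proof (intro ballI impI)
            fix T assume T: "T \<in> XF n F" "cube_adj S T"
            have Tn: "T \<subseteq> {1..n}" using T XV by blast
            from nbr[OF fin[OF Sn] fin[OF Tn] T(2)] show "\<exists>x\<in>F0. T = S - {x}"
            proof
              assume "\<exists>x\<in>S. T = S - {x} \<and> (even (card T) \<longleftrightarrow> odd (card S))"
              then obtain x where x: "x \<in> S" "T = S - {x}" "odd (card T)" using True by blast
              have "\<forall>A\<in>F. \<not> A \<subseteq> T" using XF_odd[OF T(1) x(3)] .
              then show ?thesis using F0 x by blast
            next
              assume "\<exists>x. x \<notin> S \<and> T = insert x S \<and> (even (card T) \<longleftrightarrow> odd (card S))"
              then obtain x where x: "T = insert x S" "odd (card T)" using True by blast
              have "\<forall>A\<in>F. \<not> A \<subseteq> T" using XF_odd[OF T(1) x(2)] .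
              then show ?thesis using F0 x by blast
            qed
          qed
        qed
        also have "\<dots> \<le> rank_fam F" using rank_ge[OF assms(2) F0(1)] .
        finally show ?thesis by simp
      next
        case False
        then have noS: "\<forall>A\<in>F. \<not> A \<subseteq> S" using XF_odd[OF S False] by blast
        have "ind_degree (XF n F) S \<le> t_fam F"
        proof (rule up_case[OF assms(2) XV noS])
          show "\<forall>T\<in>XF n F. cube_adj S T \<longrightarrow> (\<exists>x. x \<notin> S \<and> T = insert x S \<and> (\<exists>A\<in>F. A \<subseteq> T))"
          proof (intro ballI impI)
            fix T assume T: "T \<in> XF n F" "cube_adj S T"
            have Tn: "T \<subseteq> {1..n}" using T XV by blast
            from nbr[OF fin[OF Sn] fin[OF Tn] T(2)] show "\<exists>x. x \<notin> S \<and> T = insert x S \<and> (\<exists>A\<in>F. A \<subseteq> T)"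
            proof
              assume "\<exists>x\<in>S. T = S - {x} \<and> (even (card T) \<longleftrightarrow> odd (card S))"
              then obtain x where x: "x \<in> S" "T = S - {x}" "even (card T)" using False by blast
              have "\<exists>A\<in>F. A \<subseteq> T" using XF_even[OF T(1) x(3)] .
              then show ?thesis using noS x by blast
            next
              assume "\<exists>x. x \<notin> S \<and> T = insert x S \<and> (even (card T) \<longleftrightarrow> odd (card S))"
              then obtain x where x: "x \<notin> S" "T = insert x S" "even (card T)" using False by blast
              have "\<exists>A\<in>F. A \<subseteq> T" using XF_even[OF T(1) x(3)] .
              then show ?thesis using x by blast
            qed
          qed
        qed
        then show ?thesis by simp
      qed
    qed
  qed
  show "max_degree (Pow {1..n} - XF n F) \<le> max (rank_fam F) (t_fam F)"
  proof (rule maxdeg_le[of _ n])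
    show XV: "Pow {1..n} - XF n F \<subseteq> Pow {1..n}" by blast
    show "\<forall>S\<in>Pow {1..n} - XF n F. ind_degree (Pow {1..n} - XF n F) S \<le> max (rank_fam F) (t_fam F)"
    proof
      fix S assume S: "S \<in> Pow {1..n} - XF n F"
      have Sn: "S \<subseteq> {1..n}" using S XV by blast
      show "ind_degree (Pow {1..n} - XF n F) S \<le> max (rank_fam F) (t_fam F)"
      proof (cases "even (card S)")
        case False
        then obtain F0 where F0: "F0 \<in> F" "F0 \<subseteq> S" using nX_odd[OF Sn _ False] S by blast
        have "ind_degree (Pow {1..n} - XF n F) S \<le> card F0"
        proof (rule down_case)
          show "finite F0" using F0 Sn fin by blast
          show "\<forall>T\<in>Pow {1..n} - XF n F. cube_adj S T \<longrightarrow> (\<exists>x\<in>F0. T = S - {x})"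
          proof (intro ballI impI)
            fix T assume T: "T \<in> Pow {1..n} - XF n F" "cube_adj S T"
            have Tn: "T \<subseteq> {1..n}" using T XV by blast
            have TX: "T \<notin> XF n F" using T(1) by blast
            from nbr[OF fin[OF Sn] fin[OF Tn] T(2)] show "\<exists>x\<in>F0. T = S - {x}"
            proof
              assume "\<exists>x\<in>S. T = S - {x} \<and> (even (card T) \<longleftrightarrow> odd (card S))"
              then obtain x where x: "x \<in> S" "T = S - {x}" "even (card T)" using False by blast
              have "\<forall>A\<in>F. \<not> A \<subseteq> T" using nX_even[OF Tn TX x(3)] .
              then show ?thesis using F0 x by blast
            next
              assume "\<exists>x. x \<notin> S \<and> T = insert x S \<and> (even (card T) \<longleftrightarrow> odd (card S))"
              then obtain x where x: "T = insert x S" "even (card T)" using False by blast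
              have "\<forall>A\<in>F. \<not> A \<subseteq> T" using nX_even[OF Tn TX x(2)] .
              then show ?thesis using F0 x by blast
            qed
          qed
        qed
        also have "\<dots> \<le> rank_fam F" using rank_ge[OF assms(2) F0(1)] .
        finally show ?thesis by simp
      next
        case True
        then have noS: "\<forall>A\<in>F. \<not> A \<subseteq> S" using nX_even[OF Sn _ True] S by blast
        have "ind_degree (Pow {1..n} - XF n F) S \<le> t_fam F"
        proof (rule up_case[OF assms(2) XV noS])
          show "\<forall>T\<in>Pow {1..n} - XF n F. cube_adj S T \<longrightarrow> (\<exists>x. x \<notin> S \<and> T = insert x S \<and> (\<exists>A\<in>F. A \<subseteq> T))"
          proof (intro ballI impI)
            fix T assume T: "T \<in> Pow {1..n} - XF n F" "cube_adj S T"
            have Tn: "T \<subseteq> {1..n}" using T XV by blast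
            have TX: "T \<notin> XF n F" using T(1) by blast
            from nbr[OF fin[OF Sn] fin[OF Tn] T(2)] show "\<exists>x. x \<notin> S \<and> T = insert x S \<and> (\<exists>A\<in>F. A \<subseteq> T)"
            proof
              assume "\<exists>x\<in>S. T = S - {x} \<and> (even (card T) \<longleftrightarrow> odd (card S))"
              then obtain x where x: "x \<in> S" "T = S - {x}" "odd (card T)" using True by blast
              have "\<exists>A\<in>F. A \<subseteq> T" using nX_odd[OF Tn TX x(3)] .
              then show ?thesis using noS x by blast
            next
              assume "\<exists>x. x \<notin> S \<and> T = insert x S \<and> (even (card T) \<longleftrightarrow> odd (card S))"
              then obtain x where x: "x \<notin> S" "T = insert x S" "odd (card T)" using True by blast
              have "\<exists>A\<in>F. A \<subseteq> T" using nX_odd[OF Tn TX x(3)] .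
              then show ?thesis using x by blast
            qed
          qed
        qed
        then show ?thesis by simp
      qed
    qed
  qed
qed

end
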